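(* Let $n\ge 2$ and let $P=(x+1)(x^{n-1}+c_1x^{n-2}+\cdots+c_{n-1})$ be a real polynomial, and let $a_1,\dots,a_{n-1}\in\mathbb C$ be the numbers (unique up to permutation) with $P=K_{a_1}*\cdots*K_{a_{n-1}}$, where $K_a=(x+1)^{n-1}(x+a)$. For $j=1,\dots,n-1$ put $b_j=-j/(n-j)$. (1) If $P$ has exactly $m\ge 0$ positive roots counted with multiplicity and a root of multiplicity exactly $k\ge 0$ at $0$, then among the numbers $a_i$ there are at least $m+\max(0,k-1)$ pairwise distinct negative real numbers, $\max(0,k-1)$ of which are $b_1,\dots,b_{k-1}$ (i.e. each of $b_1,\dots,b_{k-1}$ occurs among the $a_i$); moreover, if $k\ge 1$, then one of the numbers $a_i$ equals $0$. (2) If exactly $q$ of the numbers $a_i$ equal $0$ and exactly $q_1$ of them are positive real numbers, then $P$ has at least $q_1+\max(0,q-1)$ negative roots counted with multiplicity; and if $q\ge 1$, then $P(0)=0$.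
   Context: Schur–Szegő composition of degree-$n$ polynomials: for $A=\sum_{j=0}^n\binom{n}{j}\alpha_jx^j$ and $B=\sum_{j=0}^n\binom{n}{j}\beta_jx^j$ one sets $A*B=\sum_{j=0}^n\binom{n}{j}\alpha_j\beta_jx^j$; this is commutative and associative, and for several polynomials $A_1*\cdots*A_s$ the coefficient of $\binom nj x^j$ is the product of the corresponding coefficients. All polynomials here are composed as degree-$n$ polynomials. It is known (and used as the definition of the $a_i$) that every polynomial of the form $(x+1)(x^{n-1}+c_1x^{n-2}+\cdots+c_{n-1})$ can be written as $K_{a_1}*\cdots*K_{a_{n-1}}$ with $K_a=(x+1)^{n-1}(x+a)$, the complex numbers $a_i$ being unique up to permutation; equivalently, since $K_a=\sum_{j=0}^n\binom nj\frac{(n-j)a+j}{n}x^j$, writing $P=\sum_j\binom nj p_jx^j$ one has $p_j=\prod_{i=1}^{n-1}\frac{(n-j)a_i+j}{n}$ for all $j$. For real $P$ the non-real $a_i$ come in complex conjugate pairs. *)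

theory Defs
  imports "HOL-Computational_Algebra.Polynomial" Complex_Main
begin

text \<open>Schur-Szego composition of two polynomials, both regarded as degree-n polynomials:
  if A = sum_j (n choose j) alpha_j x^j and B = sum_j (n choose j) beta_j x^j then
  A * B = sum_j (n choose j) alpha_j beta_j x^j, i.e. the j-th coefficient is
  coeff A j * coeff B j / (n choose j).\<close>
definition schur_szego :: "nat \<Rightarrow> complex poly \<Rightarrow> complex poly \<Rightarrow> complex poly" where
  "schur_szego n A B =
     Poly (map (\<lambda>j. coeff A j * coeff B j / of_nat (n choose j)) [0..<Suc n])"

definition K_poly :: "nat \<Rightarrow> complex \<Rightarrow> complex poly" where
  "K_poly n a = [:1, 1:] ^ (n - 1) * [:a, 1:]"

text \<open>Schur-Szego composition K_{a_1} * ... * K_{a_s} (degree-n composition).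
  The neutral element of the composition is (x+1)^n.\<close>
definition schur_szego_K :: "nat \<Rightarrow> complex list \<Rightarrow> complex poly" where
  "schur_szego_K n as = foldr (\<lambda>a acc. schur_szego n (K_poly n a) acc) as ([:1, 1:] ^ n)"

end

theory Submission
  imports Defs
begin

fun fnz :: "real list \<Rightarrow> real" where
  "fnz [] = 0"
| "fnz (x # xs) = (if x \<noteq> 0 then x else fnz xs)"

fun var :: "real list \<Rightarrow> nat" where
  "var [] = 0"
| "var (x # xs) = var xs + (if x * fnz xs < 0 then 1 else 0)"

fun hh :: "real \<Rightarrow> real \<Rightarrow> real list \<Rightarrow> real list" where
  "hh r c [] = [c]"
| "hh r c (g # gs) = (c - r * g) # hh r g gs"

lemma fnz_zero_iff: "fnz xs = 0 \<longleftrightarrow> (\<forall>x\<in>set xs. x = 0)"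
  by (induction xs) auto

lemma var_zero_list: "fnz xs = 0 \<Longrightarrow> var xs = 0"
  by (induction xs) (auto split: if_splits)

lemma hh_allzero: "fnz gs = 0 \<Longrightarrow> fnz (hh r c gs) = c"
  by (induction gs arbitrary: c) (auto split: if_splits)

lemma hh_fnz_nz: "fnz gs \<noteq> 0 \<Longrightarrow> r > 0 \<Longrightarrow> fnz (hh r c gs) \<noteq> 0"
proof (induction gs arbitrary: c)
  case Nil then show ?case by simp
next
  case (Cons g gs)
  show ?case
  proof (cases "fnz gs = 0")
    case True
    then have "g \<noteq> 0" using Cons.prems by (auto split: if_splits)
    then show ?thesis using True hh_allzero[OF True, of r g] by auto
  next
    case False
    then show ?thesis using Cons.IH[OF False Cons.prems(2), of g] by auto
  qed
qed

lemma hh_first: "c * fnz gs \<le> 0 \<Longrightarrow> fnz gs \<noteq> 0 \<Longrightarrow> r > 0 \<Longrightarrow> fnz (hh r c gs) * fnz gs < 0"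
proof (induction gs arbitrary: c)
  case Nil then show ?case by simp
next
  case (Cons g gs)
  show ?case
  proof (cases "g = 0")
    case False
    have "(c - r * g) * g < 0"
    proof -
      have "c * g \<le> 0" using Cons.prems False by simp
      moreover have "r * (g * g) > 0" using Cons.prems(3) False
        by (metis mult_pos_pos not_real_square_gt_zero)
      ultimately show ?thesis by (simp add: algebra_simps)
    qed
    then have "c - r * g \<noteq> 0" by auto
    then show ?thesis using False \<open>(c - r * g) * g < 0\<close> by simp
  next
    case True
    show ?thesis
    proof (cases "c = 0")
      case True
      with \<open>g = 0\<close> Cons show ?thesis by simp
    next
      case False
      have "fnz gs \<noteq> 0" using Cons.prems \<open>g = 0\<close> by simp
      then have "c * fnz gs \<noteq> 0" using False by simp
      with Cons.prems \<open>g = 0\<close> False show ?thesis by (simp add: order_less_le)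
    qed
  qed
qed

lemma hh_var: "fnz gs \<noteq> 0 \<Longrightarrow> r > 0 \<Longrightarrow>
  var (hh r c gs) \<ge> var gs + (if fnz (hh r c gs) * fnz gs < 0 then 1 else 0)"
proof (induction gs arbitrary: c)
  case Nil then show ?case by simp
next
  case (Cons g gs)
  show ?case
  proof (cases "fnz gs = 0")
    case True
    then have g0: "g \<noteq> 0" using Cons.prems by (auto split: if_splits)
    have vz: "var gs = 0" using var_zero_list[OF True] .
    have e': "fnz (hh r g gs) = g" using hh_allzero[OF True] .
    show ?thesis using g0 vz e' True by auto
  next
    case False
    let ?H = "hh r g gs"
    have IH: "var ?H \<ge> var gs + (if fnz ?H * fnz gs < 0 then 1 else 0)"
      using Cons.IH[OF False Cons.prems(2)] .
    have e'nz: "fnz ?H \<noteq> 0" using hh_fnz_nz[OF False Cons.prems(2)] .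
    show ?thesis
    proof (cases "g = 0")
      case True
      have "fnz ?H * fnz gs < 0" using hh_first[of g gs r] True False Cons.prems by simp
      then show ?thesis using IH True by auto
    next
      case gnz: False
      show ?thesis
      proof (cases "g * fnz gs < 0")
        case True
        have A: "fnz ?H * fnz gs < 0" using hh_first[of g gs r] True False Cons.prems by simp
        have "fnz ?H * g > 0" using A True
          by (auto simp: mult_less_0_iff zero_less_mult_iff)
        then show ?thesis using IH A True gnz
          by (auto simp: mult_less_0_iff zero_less_mult_iff)
      next
        case gsame: False
        have gp: "g * fnz gs > 0" using gsame gnz False
          by (metis linorder_neqE_linordered_idom mult_eq_0_iff)
        show ?thesis using IH gp gsame gnz e'nz
          by (auto simp: mult_less_0_iff zero_less_mult_iff)
      qed
    qed
  qed
qed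

lemma Poly_hh: "Poly (hh r c gs) = [:c:] + [:-r,1:] * Poly gs"
proof (induction gs arbitrary: c)
  case Nil then show ?case by simp
next
  case (Cons g gs)
  show ?case using Cons by (simp add: algebra_simps)
qed

lemma fnz_append_zero: "fnz zs = 0 \<Longrightarrow> fnz (xs @ zs) = fnz xs"
  by (induction xs) auto

lemma var_append_zero: "fnz zs = 0 \<Longrightarrow> var (xs @ zs) = var xs"
  by (induction xs) (auto simp: fnz_append_zero var_zero_list)

lemma var_strip: "var (strip_while ((=) 0) xs) = var xs"
proof (induction xs rule: rev_induct)
  case Nil then show ?case by simp
next
  case (snoc x xs)
  then show ?case using var_append_zero[of "[x]" xs] by auto
qed

definition Var :: "real poly \<Rightarrow> nat" where "Var p = var (coeffs p)"

lemma Var_Poly: "Var (Poly xs) = var xs"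
  unfolding Var_def by (simp add: var_strip)

lemma Poly_allzero: "(\<forall>x\<in>set xs. x = 0) \<Longrightarrow> Poly xs = 0"
  by (induction xs) auto

lemma fnz_coeffs: "g \<noteq> 0 \<Longrightarrow> fnz (coeffs g) \<noteq> 0"
  using Poly_allzero[of "coeffs g"] fnz_zero_iff by auto

lemma Var_mult_lin: assumes "g \<noteq> 0" "r > 0" shows "Var ([:-r,1:] * g) \<ge> Var g + 1"
proof -
  have e: "[:-r,1:] * g = Poly (hh r 0 (coeffs g))" by (simp add: Poly_hh)
  have nz: "fnz (coeffs g) \<noteq> 0" using fnz_coeffs[OF assms(1)] .
  have "fnz (hh r 0 (coeffs g)) * fnz (coeffs g) < 0" using hh_first[of 0 "coeffs g" r] nz assms by simp
  then show ?thesis using hh_var[OF nz assms(2), of 0] unfolding e Var_Poly by (simp add: Var_def)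
qed

definition Zp :: "real poly \<Rightarrow> nat" where
  "Zp p = (\<Sum>r\<in>{r::real. r > 0 \<and> poly p r = 0}. order r p)"

lemma order_lin: "order x [:-r,1:] = (if x = r then 1 else (0::nat))" for r x :: real
proof (cases "x = r")
  case True then show ?thesis using order_power_n_n[of r 1] by simp
next
  case False then show ?thesis by (simp add: order_0I)
qed

lemma Zp_mult_lin: assumes "g \<noteq> 0" "r > 0" shows "Zp ([:-r,1:] * g) = Zp g + 1"
proof -
  let ?p = "[:-r,1:] * g"
  have pnz: "?p \<noteq> 0" using assms by (metis mult_eq_0_iff pCons_eq_0_iff zero_neq_one)
  have S: "{x::real. x > 0 \<and> poly ?p x = 0} = insert r {x. x > 0 \<and> poly g x = 0}"
    using assms by auto
  have fin: "finite {x::real. x > 0 \<and> poly g x = 0}"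
    using poly_roots_finite[OF assms(1)] by (rule rev_finite_subset) auto
  have ord: "\<And>x. order x ?p = (if x = r then 1 else 0) + order x g"
    using order_mult[OF pnz] order_lin by simp
  have "Zp ?p = (\<Sum>x\<in>insert r {x. x > 0 \<and> poly g x = 0}. (if x = r then 1 else 0) + order x g)"
    unfolding Zp_def S using ord by simp
  also have "\<dots> = (\<Sum>x\<in>insert r {x. x > 0 \<and> poly g x = 0}. (if x = r then 1 else 0))
       + (\<Sum>x\<in>insert r {x. x > 0 \<and> poly g x = 0}. order x g)"
    by (simp add: sum.distrib)
  also have "(\<Sum>x\<in>insert r {x. x > 0 \<and> poly g x = 0}. (if x = r then 1 else (0::nat))) = 1"
    using fin by (simp add: sum.delta)
  also have "(\<Sum>x\<in>insert r {x. x > 0 \<and> poly g x = 0}. order x g) = Zp g"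
  proof (cases "poly g r = 0")
    case True
    then have "insert r {x. x > 0 \<and> poly g x = 0} = {x. x > 0 \<and> poly g x = 0}" using assms by auto
    then show ?thesis by (simp add: Zp_def)
  next
    case False
    then show ?thesis using fin by (simp add: Zp_def sum.insert order_0I)
  qed
  finally show ?thesis by simp
qed

lemma descartes: "p \<noteq> 0 \<Longrightarrow> Zp p \<le> Var p"
proof (induction "degree p" arbitrary: p rule: less_induct)
  case (less p)
  show ?case
  proof (cases "\<exists>r>0. poly p r = 0")
    case False
    then have "{r::real. r > 0 \<and> poly p r = 0} = {}" by auto
    then show ?thesis unfolding Zp_def by (metis sum.empty zero_le)
  next
    case True
    then obtain r where r: "r > 0" "poly p r = 0" by auto
    then obtain g where g: "p = [:-r,1:] * g" using poly_eq_0_iff_dvd by (metis dvdE)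
    have gnz: "g \<noteq> 0" using less.prems g by auto
    have "degree p = degree [:-r,(1::real):] + degree g" unfolding g
      by (rule degree_mult_eq) (use gnz in auto)
    then have "degree p = degree g + 1" by simp
    then have "Zp g \<le> Var g" using less.hyps gnz by simp
    then show ?thesis using g Zp_mult_lin[OF gnz r(1)] Var_mult_lin[OF gnz r(1)] by simp
  qed
qed

lemma mult_neg_sgn: "(x * y < (0::real)) \<longleftrightarrow> sgn x * sgn y < 0"
  by (metis sgn_less sgn_mult)

lemma var_zeros_prefix: "(\<forall>x\<in>set zs. x = 0) \<Longrightarrow> var (zs @ ys) = var ys"
  by (induction zs) auto

lemma var_sgn: "(\<forall>j\<in>set js. sgn (f j) = sgn (g j)) \<Longrightarrow>
   var (map f js) = var (map g js) \<and> sgn (fnz (map f js)) = sgn (fnz (map g js))"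
proof (induction js)
  case Nil then show ?case by simp
next
  case (Cons j js)
  then have IH: "var (map f js) = var (map g js)" "sgn (fnz (map f js)) = sgn (fnz (map g js))" by auto
  have sj: "sgn (f j) = sgn (g j)" using Cons.prems by simp
  have z: "f j = 0 \<longleftrightarrow> g j = 0" using sj by (metis sgn_0_0)
  have m: "(f j * fnz (map f js) < 0) = (g j * fnz (map g js) < 0)"
    using sj IH(2) mult_neg_sgn by metis
  have v: "var (map f (j # js)) = var (map g (j # js))"
    using IH(1) m by simp
  have s: "sgn (fnz (map f (j # js))) = sgn (fnz (map g (j # js)))"
    using IH(2) z sj by simp
  show ?case using v s by blast
qed
lemma var_cons_le: "var (x # xs) \<le> var xs + 1"
  by simp

lemma seq_var:
  fixes \<phi> :: "real \<Rightarrow> real" and n K :: nat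
  assumes cont: "continuous_on UNIV \<phi>" and fin: "finite {t. \<phi> t = 0}"
    and Kn: "K \<le> n" and phin: "\<phi> (real n) \<noteq> 0"
  shows "var (map (\<lambda>j. \<phi> (real j)) [K..<Suc n]) + (if \<phi> (real K) = 0 then 1 else 0)
          \<le> card {t. real K \<le> t \<and> t < real n \<and> \<phi> t = 0}"
  using Kn
proof (induction K rule: inc_induct)
  case base
  then show ?case using phin by simp
next
  case (step K)
  define rest where "rest = map (\<lambda>j. \<phi> (real j)) [Suc K..<Suc n]"
  have eq: "map (\<lambda>j. \<phi> (real j)) [K..<Suc n] = \<phi> (real K) # rest"
    unfolding rest_def using step.hyps by (simp add: upt_conv_Cons)
  have fr: "\<phi> (real (Suc K)) \<noteq> 0 \<Longrightarrow> fnz rest = \<phi> (real (Suc K))"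
    unfolding rest_def using step.hyps by (simp del: upt_Suc add: upt_conv_Cons)
  define C' where "C' = card {t. real (Suc K) \<le> t \<and> t < real n \<and> \<phi> t = 0}"
  define C where "C = card {t. real K \<le> t \<and> t < real n \<and> \<phi> t = 0}"
  define I where "I = {t. real K \<le> t \<and> t < real (Suc K) \<and> \<phi> t = 0}"
  have split: "{t. real K \<le> t \<and> t < real n \<and> \<phi> t = 0} =
      I \<union> {t. real (Suc K) \<le> t \<and> t < real n \<and> \<phi> t = 0}"
    unfolding I_def using step.hyps by auto
  have finI: "finite I" unfolding I_def by (rule finite_subset[OF _ fin]) auto
  have fin2: "finite {t. real (Suc K) \<le> t \<and> t < real n \<and> \<phi> t = 0}"
    by (rule finite_subset[OF _ fin]) auto
  have CC: "C = card I + C'"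
    unfolding C_def C'_def split using finI fin2
    by (subst card_Un_disjoint) (auto simp: I_def)
  have IH: "var rest + (if \<phi> (real (Suc K)) = 0 then 1 else 0) \<le> C'"
    using step.IH unfolding rest_def C'_def .
  have I1: "card I \<ge> 1" if "\<exists>t. real K \<le> t \<and> t < real (Suc K) \<and> \<phi> t = 0"
  proof -
    from that obtain t where "real K \<le> t \<and> t < real (Suc K) \<and> \<phi> t = 0" by blast
    then have "t \<in> I" unfolding I_def by blast
    then have "I \<noteq> {}" by auto
    then show ?thesis using finI by (simp add: Suc_le_eq card_gt_0_iff)
  qed
  have contK: "continuous_on {real K..real (Suc K)} \<phi>"
    using cont by (rule continuous_on_subset) auto
  show ?case
  proof (cases "\<phi> (real K) = 0")
    case True
    have "card I \<ge> 1" using I1 True by (metis less_add_one of_nat_Suc order_refl add.commute)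
    then show ?thesis using IH CC eq by (simp add: C_def)
  next
    case Knz: False
    show ?thesis
    proof (cases "\<phi> (real (Suc K)) = 0")
      case True
      then show ?thesis using IH CC eq Knz by (simp add: C_def)
    next
      case Snz: False
      show ?thesis
      proof (cases "\<phi> (real K) * \<phi> (real (Suc K)) < 0")
        case True
        have "\<exists>t. real K \<le> t \<and> t < real (Suc K) \<and> \<phi> t = 0"
        proof (cases "\<phi> (real K) < 0")
          case True
          then have "\<phi> (real (Suc K)) > 0" using \<open>\<phi> (real K) * \<phi> (real (Suc K)) < 0\<close>
            by (auto simp: mult_less_0_iff)
          then obtain t where "real K \<le> t" "t \<le> real (Suc K)" "\<phi> t = 0"
            using IVT'[of \<phi> "real K" 0 "real (Suc K)"] True contK by auto
          then show ?thesis using Snz by (intro exI[of _ t]) (auto simp: order_le_less)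
        next
          case False
          then have "\<phi> (real K) > 0" "\<phi> (real (Suc K)) < 0" using Knz \<open>\<phi> (real K) * \<phi> (real (Suc K)) < 0\<close>
            by (auto simp: mult_less_0_iff)
          then obtain t where "real K \<le> t" "t \<le> real (Suc K)" "\<phi> t = 0"
            using IVT2'[of \<phi> "real (Suc K)" 0 "real K"] contK by auto
          then show ?thesis using Snz by (intro exI[of _ t]) (auto simp: order_le_less)
        qed
        then have "card I \<ge> 1" using I1 by auto
        then show ?thesis using IH CC eq Knz Snz fr by (simp add: C_def)
      next
        case False
        then show ?thesis using IH CC eq Knz Snz fr by (simp add: C_def)
      qed
    qed
  qed
qed

definition E :: "nat \<Rightarrow> complex \<Rightarrow> complex \<Rightarrow> complex" where
  "E n a t = a + (1 - a) * t / of_nat n"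

lemma coeff_x1_pow: "coeff ([:1,1:]^m) i = (of_nat (m choose i) :: 'a::comm_semiring_1)"
proof (cases "i \<le> m")
  case True then show ?thesis using coeff_linear_poly_power[OF True, of "1::'a" 1] by simp
next
  case False
  have "degree ([:1::'a,1:]^m) \<le> degree [:1::'a,1:] * m" by (rule degree_power_le)
  also have "\<dots> \<le> m" by (cases "(1::'a) = 0") auto
  finally have "degree ([:1::'a,1:]^m) \<le> m" .
  then show ?thesis using False by (simp add: coeff_eq_0 binomial_eq_0)
qed

lemma coeff_K:
  assumes n: "n \<ge> 1"
  shows "coeff (K_poly n a) j = (if j \<le> n then of_nat (n choose j) * E n a (of_nat j) else 0)"
proof -
  have K: "K_poly n a = smult a ([:1,1:]^(n-1)) + pCons 0 ([:1,1:]^(n-1))"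
    unfolding K_poly_def by (simp add: mult.commute[of _ "[:a,1:]"] mult_pCons_left)
  show ?thesis
  proof (cases j)
    case 0 then show ?thesis using K by (simp add: coeff_x1_pow E_def)
  next
    case (Suc i)
    have cj: "coeff (K_poly n a) j = a * of_nat ((n-1) choose j) + of_nat ((n-1) choose i)"
      using K Suc by (simp add: coeff_x1_pow)
    show ?thesis
    proof (cases "j \<le> n")
      case True
      have id1: "(n - j) * (n choose j) = n * ((n - 1) choose j)" by (rule binomial_absorb_comp)
      have id2: "j * (n choose j) = n * ((n - 1) choose i)" using binomial_absorption[of i n] Suc by simp
      have id1': "(of_nat n - of_nat j) * of_nat (n choose j) = (of_nat n * of_nat ((n - 1) choose j) :: complex)"
        using arg_cong[OF id1, of "of_nat :: nat \<Rightarrow> complex"] True by (simp add: of_nat_diff)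
      have id2': "of_nat j * of_nat (n choose j) = (of_nat n * of_nat ((n - 1) choose i) :: complex)"
        using arg_cong[OF id2, of "of_nat :: nat \<Rightarrow> complex"] by simp
      have nz: "(of_nat n :: complex) \<noteq> 0" using n by simp
      have "of_nat n * (a * of_nat ((n-1) choose j) + of_nat ((n-1) choose i))
            = of_nat n * (of_nat (n choose j) * E n a (of_nat j))"
      proof -
        have "of_nat n * (a * of_nat ((n-1) choose j) + of_nat ((n-1) choose i))
            = a * (of_nat n * of_nat ((n-1) choose j)) + of_nat n * of_nat ((n-1) choose i)"
          by (simp add: algebra_simps)
        also have "\<dots> = a * ((of_nat n - of_nat j) * of_nat (n choose j)) + of_nat j * of_nat (n choose j)"
          using id1' id2' by simp
        also have "\<dots> = of_nat (n choose j) * (of_nat n * a + (1 - a) * of_nat j)"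
          by (simp add: algebra_simps)
        also have "of_nat n * a + (1 - a) * of_nat j = of_nat n * E n a (of_nat j)"
          unfolding E_def using nz by (simp add: distrib_left)
        finally show ?thesis by simp
      qed
      then have "a * of_nat ((n-1) choose j) + of_nat ((n-1) choose i) = of_nat (n choose j) * E n a (of_nat j)"
        using nz by simp
      then show ?thesis using cj True by simp
    next
      case False
      then show ?thesis using cj Suc n by (simp add: binomial_eq_0)
    qed
  qed
qed

lemma coeff_ssK:
  assumes n: "n \<ge> 1"
  shows "coeff (schur_szego_K n as) j = (if j \<le> n then of_nat (n choose j) * (\<Prod>a\<leftarrow>as. E n a (of_nat j)) else 0)"
proof (induction as arbitrary: j)
  case Nil
  then show ?case by (simp add: schur_szego_K_def coeff_x1_pow binomial_eq_0)
next
  case (Cons a as)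
  have e: "schur_szego_K n (a # as) = schur_szego n (K_poly n a) (schur_szego_K n as)"
    by (simp add: schur_szego_K_def)
  show ?case
  proof (cases "j \<le> n")
    case True
    have nz: "(of_nat (n choose j) :: complex) \<noteq> 0" using True by simp
    have "coeff (schur_szego_K n (a # as)) j = coeff (K_poly n a) j * coeff (schur_szego_K n as) j / of_nat (n choose j)"
      unfolding e schur_szego_def using True by (simp add: nth_default_def del: upt_Suc)
    also have "\<dots> = of_nat (n choose j) * (\<Prod>a\<leftarrow>a # as. E n a (of_nat j))"
      using True nz Cons.IH[of j] coeff_K[OF n, of a j] by simp
    finally show ?thesis using True by simp
  next
    case False
    then show ?thesis unfolding e schur_szego_def by (simp add: nth_default_def del: upt_Suc)
  qed
qed

lemma prod_list_map_one: "(\<forall>x\<in>set xs. f x = (1::'a::monoid_mult)) \<Longrightarrow> prod_list (map f xs) = 1"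
  by (induction xs) auto

lemma sum_deg_lin: "sum_list (map degree (map (\<lambda>a. [:a, g a:]) xs)) \<le> length xs"
  by (induction xs) (auto simp: degree_pCons_le intro: add_mono)

locale ctx =
  fixes n :: nat and P Q :: "real poly" and as :: "complex list"
  assumes n2: "n \<ge> 2"
    and PQ: "P = [:1, 1:] * Q" and degQ: "degree Q = n - 1" and monQ: "lead_coeff Q = 1"
    and len: "length as = n - 1"
    and rep: "map_poly complex_of_real P = schur_szego_K n as"
begin

lemma n1: "n \<ge> 1" using n2 by simp

lemma Qnz: "Q \<noteq> 0" using monQ by auto

lemma degP: "degree P = n"
proof -
  have "degree P = degree [:1,(1::real):] + degree Q" unfolding PQ
    by (rule degree_mult_eq) (use Qnz in auto)
  then show ?thesis using degQ n2 by simp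
qed

lemma Pnz: "P \<noteq> 0" using PQ Qnz by (metis mult_eq_0_iff pCons_eq_0_iff zero_neq_one)

lemma coeffPn: "coeff P n = 1"
proof -
  have "lead_coeff P = lead_coeff [:1,(1::real):] * lead_coeff Q" unfolding PQ by (rule lead_coeff_mult)
  then show ?thesis using monQ degP by simp
qed

lemma cP: "j \<le> n \<Longrightarrow> complex_of_real (coeff P j) = of_nat (n choose j) * (\<Prod>a\<leftarrow>as. E n a (of_nat j))"
proof -
  assume j: "j \<le> n"
  have "complex_of_real (coeff P j) = coeff (map_poly complex_of_real P) j" by (simp add: coeff_map_poly)
  also have "\<dots> = of_nat (n choose j) * (\<Prod>a\<leftarrow>as. E n a (of_nat j))" unfolding rep coeff_ssK[OF n1] using j by simp
  finally show ?thesis .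
qed

definition FP :: "complex poly" where "FP = (\<Prod>a\<leftarrow>as. [:a, (1 - a) / of_nat n:])"

lemma poly_FP: "poly FP t = (\<Prod>a\<leftarrow>as. E n a t)"
proof -
  have "poly FP t = (\<Prod>p\<leftarrow>map (\<lambda>a. [:a, (1 - a) / of_nat n:]) as. poly p t)"
    unfolding FP_def using poly_prod_list[of "map (\<lambda>a. [:a, (1 - a) / of_nat n:]) as" t] by simp
  also have "\<dots> = (\<Prod>a\<leftarrow>as. E n a t)"
    by (simp add: E_def o_def algebra_simps)
  finally show ?thesis .
qed

lemma degFP: "degree FP \<le> n - 1"
proof -
  have "degree FP \<le> sum_list (map degree (map (\<lambda>a. [:a, (1 - a) / of_nat n:]) as))"
    unfolding FP_def by (rule degree_prod_list_le)
  also have "\<dots> \<le> length as" by (rule sum_deg_lin)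
  also have "\<dots> = n - 1" using len by simp
  finally show ?thesis .
qed

lemma FP_int: "j \<le> n \<Longrightarrow> poly FP (of_nat j) = complex_of_real (coeff P j / real (n choose j))"
proof -
  assume j: "j \<le> n"
  have nz: "(of_nat (n choose j) :: complex) \<noteq> 0" using j by simp
  show ?thesis using cP[OF j] nz unfolding poly_FP by (simp add: field_simps)
qed

lemma FP_cnj: "map_poly cnj FP = FP"
proof (rule poly_eqI_degree[of "of_nat ` {0..n}"])
  fix x :: complex assume "x \<in> of_nat ` {0..n}"
  then obtain j where j: "j \<le> n" "x = of_nat j" by auto
  show "poly (map_poly cnj FP) x = poly FP x"
    using FP_int[OF j(1)] j(2) by simp
next
  have c: "card (of_nat ` {0..n} :: complex set) = Suc n"
    by (subst card_image) (auto simp: inj_on_def)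
  show "degree (map_poly cnj FP) < card (of_nat ` {0..n} :: complex set)"
    unfolding c using degFP by (subst degree_map_poly) auto
  show "degree FP < card (of_nat ` {0..n} :: complex set)"
    unfolding c using degFP by auto
qed

definition phi :: "real \<Rightarrow> real" where "phi t = Re (poly FP (complex_of_real t))"

lemma FP_real: "poly FP (complex_of_real t) = complex_of_real (phi t)"
proof -
  have "poly FP (complex_of_real t) = poly (map_poly cnj FP) (complex_of_real t)" using FP_cnj by simp
  also have "\<dots> = cnj (poly FP (complex_of_real t))" by simp
  finally have "Im (poly FP (complex_of_real t)) = 0"
    by (metis cnj.simps(2) neg_equal_zero)
  then show ?thesis unfolding phi_def by (simp add: complex_eq_iff)
qed

lemma phi_cont: "continuous_on UNIV phi"
  unfolding phi_def by (intro continuous_intros)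

lemma FPn: "poly FP (of_nat n) = 1"
proof -
  have "\<forall>a\<in>set as. E n a (of_nat n) = 1" unfolding E_def using n1 by simp
  then show ?thesis unfolding poly_FP by (rule prod_list_map_one)
qed

lemma FPnz: "FP \<noteq> 0" using FPn by auto

lemma phi_fin: "finite {t. phi t = 0}"
proof -
  have "{t. phi t = 0} \<subseteq> complex_of_real -` {z. poly FP z = 0}" using FP_real by auto
  moreover have "finite (complex_of_real -` {z. poly FP z = 0})"
    by (rule finite_vimageI[OF poly_roots_finite[OF FPnz]]) (auto simp: inj_on_def)
  ultimately show ?thesis by (rule finite_subset)
qed

lemma coeffP_phi: "j \<le> n \<Longrightarrow> coeff P j = real (n choose j) * phi (real j)"
proof -
  assume j: "j \<le> n"
  have "complex_of_real (phi (real j)) = complex_of_real (coeff P j / real (n choose j))"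
    using FP_int[OF j] FP_real[of "real j"] by (metis of_real_of_nat_eq)
  then have "phi (real j) = coeff P j / real (n choose j)" by (simp only: of_real_eq_iff)
  then show ?thesis using j by simp
qed

lemma phi_root: assumes "0 < t" "t < real n" "phi t = 0"
  shows "complex_of_real (- t / (real n - t)) \<in> set as"
proof -
  have "poly FP (complex_of_real t) = 0" using FP_real assms by simp
  then have "0 \<in> set (map (\<lambda>a. E n a (complex_of_real t)) as)"
    unfolding poly_FP by (simp add: prod_list_zero_iff)
  then obtain a where a: "a \<in> set as" "E n a (complex_of_real t) = 0" by auto
  have nz: "(of_nat n :: complex) \<noteq> 0" using n1 by simp
  have "of_nat n * E n a (complex_of_real t) = a * of_nat n + (1 - a) * complex_of_real t"
    unfolding E_def using nz by (simp add: distrib_left mult.commute)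
  then have "a * of_nat n + (1 - a) * complex_of_real t = 0" using a(2) by simp
  then have e: "a * (of_real (real n - t)) = - complex_of_real t"
    by (simp add: algebra_simps)
  have "real n - t \<noteq> 0" using assms by simp
  then have nz2: "complex_of_real (real n - t) \<noteq> 0" by (simp only: of_real_eq_0_iff) simp
  have "a = complex_of_real (- t / (real n - t))"
    using e nz2 by (simp add: field_simps)
  then show ?thesis using a(1) by simp
qed

end

context ctx begin

definition kk :: nat where "kk = order 0 P"

lemma monom_x: "[:-0, 1:] ^ m = (monom 1 m :: real poly)"
  by (simp add: monom_altdef)

lemma coeff_below: "j < kk \<Longrightarrow> coeff P j = 0"
  using order_1[of 0 P] unfolding kk_def monom_x monom_1_dvd_iff' by blast

lemma coeff_kk: "coeff P kk \<noteq> 0"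
proof
  assume h: "coeff P kk = 0"
  have "\<forall>j<Suc kk. coeff P j = 0" using coeff_below h less_Suc_eq by auto
  then have "monom 1 (Suc kk) dvd P" using monom_1_dvd_iff' by blast
  then show False using order_2[OF Pnz, of 0] unfolding kk_def monom_x by blast
qed

lemma kk_le: "kk \<le> n"
proof (rule ccontr)
  assume "\<not> kk \<le> n"
  then have "coeff P n = 0" using coeff_below by simp
  then show False using coeffPn by simp
qed

lemma phi_below: "j < kk \<Longrightarrow> phi (real j) = 0"
  using coeff_below[of j] coeffP_phi[of j] kk_le by simp

lemma phi_kk: "phi (real kk) \<noteq> 0"
  using coeff_kk coeffP_phi[OF kk_le] by auto

lemma phi_n: "phi (real n) \<noteq> 0"
  using coeffPn coeffP_phi[of n] by auto

lemma Var_P: "Var P = var (map (\<lambda>j. phi (real j)) [kk..<Suc n])"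
proof -
  have "coeffs P = map (coeff P) [0..<Suc n]" using Pnz degP by (simp add: coeffs_def)
  then have "Var P = var (map (coeff P) [0..<Suc n])" by (simp add: Var_def)
  also have "\<dots> = var (map (\<lambda>j. phi (real j)) [0..<Suc n])"
  proof -
    have "\<forall>j\<in>set [0..<Suc n]. sgn (coeff P j) = sgn (phi (real j))"
    proof
      fix j assume "j \<in> set [0..<Suc n]"
      then have j: "j \<le> n" by auto
      have "real (n choose j) > 0" using j by simp
      then show "sgn (coeff P j) = sgn (phi (real j))"
        using coeffP_phi[OF j] by (simp add: sgn_mult)
    qed
    from var_sgn[OF this] show ?thesis by blast
  qed
  also have "[0..<Suc n] = [0..<kk] @ [kk..<Suc n]"
    using upt_add_eq_append[of 0 kk "Suc n - kk"] kk_le by simp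
  also have "var (map (\<lambda>j. phi (real j)) ([0..<kk] @ [kk..<Suc n])) = var (map (\<lambda>j. phi (real j)) [kk..<Suc n])"
    unfolding map_append by (rule var_zeros_prefix) (use phi_below in auto)
  finally show ?thesis .
qed

definition Troots :: "real set" where "Troots = {t. real kk \<le> t \<and> t < real n \<and> phi t = 0}"

lemma Zp_le: "Zp P \<le> card Troots"
proof -
  have "Zp P \<le> Var P" by (rule descartes[OF Pnz])
  also have "\<dots> \<le> var (map (\<lambda>j. phi (real j)) [kk..<Suc n]) + (if phi (real kk) = 0 then 1 else 0)"
    unfolding Var_P by simp
  also have "\<dots> \<le> card Troots" unfolding Troots_def
    by (rule seq_var[OF phi_cont phi_fin kk_le phi_n])
  finally show ?thesis .
qed

definition psi :: "real \<Rightarrow> real" where "psi t = - t / (real n - t)"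

lemma psi_inj: "inj_on psi {t. 0 < t \<and> t < real n}"
proof (rule inj_onI)
  fix x y assume x: "x \<in> {t. 0 < t \<and> t < real n}" and y: "y \<in> {t. 0 < t \<and> t < real n}" and e: "psi x = psi y"
  have nx: "real n - x \<noteq> 0" and ny: "real n - y \<noteq> 0" using x y by auto
  show "x = y" using e nx ny n1 unfolding psi_def by (auto simp: field_simps)
qed

lemma part1:
  "Zp P + (kk - 1) \<le> card {x::real. x < 0 \<and> complex_of_real x \<in> set as}
   \<and> (\<forall>j\<in>{1..<kk}. complex_of_real (- real j / (real n - real j)) \<in> set as)
   \<and> (kk \<ge> 1 \<longrightarrow> 0 \<in> set as)"
proof (intro conjI)
  show "\<forall>j\<in>{1..<kk}. complex_of_real (- real j / (real n - real j)) \<in> set as"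
  proof
    fix j assume j: "j \<in> {1..<kk}"
    then have "0 < real j" "real j < real n" using kk_le by auto
    moreover have "phi (real j) = 0" using phi_below j by auto
    ultimately show "complex_of_real (- real j / (real n - real j)) \<in> set as"
      by (rule phi_root)
  qed
  show "kk \<ge> 1 \<longrightarrow> 0 \<in> set as"
  proof
    assume "kk \<ge> 1"
    then have "phi 0 = 0" using phi_below[of 0] by simp
    then have "poly FP 0 = 0" using FP_real[of 0] by simp
    then have "0 \<in> set (map (\<lambda>a. E n a 0) as)" unfolding poly_FP by (simp add: prod_list_zero_iff)
    then show "0 \<in> set as" by (auto simp: E_def)
  qed
  define T0 where "T0 = real ` {1..<kk} \<union> Troots"
  define S where "S = {x::real. x < 0 \<and> complex_of_real x \<in> set as}"
  have finT: "finite Troots" unfolding Troots_def by (rule finite_subset[OF _ phi_fin]) auto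
  have disj: "real ` {1..<kk} \<inter> Troots = {}"
    unfolding Troots_def by auto
  have cT0: "card T0 = (kk - 1) + card Troots"
    unfolding T0_def using finT disj by (subst card_Un_disjoint) (auto simp: card_image)
  have T0sub: "T0 \<subseteq> {t. 0 < t \<and> t < real n}"
    unfolding T0_def Troots_def using kk_le phi_kk by (auto simp: order_le_less)
  have img: "psi ` T0 \<subseteq> S"
  proof
    fix x assume "x \<in> psi ` T0"
    then obtain t where t: "t \<in> T0" "x = psi t" by auto
    have tt: "0 < t" "t < real n" using t(1) T0sub by auto
    have "phi t = 0" using t(1) phi_below unfolding T0_def Troots_def by auto
    then have "complex_of_real (psi t) \<in> set as" using phi_root[OF tt] unfolding psi_def by simp
    moreover have "psi t < 0" using tt unfolding psi_def by (simp add: divide_neg_pos)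
    ultimately show "x \<in> S" unfolding S_def using t by simp
  qed
  have finS: "finite S"
  proof -
    have "S \<subseteq> Re ` set as" unfolding S_def by force
    then show ?thesis by (rule finite_subset) simp
  qed
  have "card T0 = card (psi ` T0)" using inj_on_subset[OF psi_inj T0sub] by (simp add: card_image)
  also have "\<dots> \<le> card S" using card_mono[OF finS img] .
  finally have "card T0 \<le> card S" .
  then show "Zp P + (kk - 1) \<le> card {x::real. x < 0 \<and> complex_of_real x \<in> set as}"
    using Zp_le cT0 unfolding S_def by simp
qed

end

definition theta :: "real poly \<Rightarrow> real poly" where "theta u = pCons 0 (pderiv u)"
definition wt :: "real \<Rightarrow> real poly \<Rightarrow> real poly" where "wt t u = theta u - smult t u"

lemma poly_theta: "poly (theta u) x = x * poly (pderiv u) x"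
  by (simp add: theta_def)

lemma poly_wt: "poly (wt t u) x = x * poly (pderiv u) x - t * poly u x"
  by (simp add: wt_def poly_theta)

lemma coeff_theta: "coeff (theta u) j = of_nat j * coeff u j"
  by (cases j) (simp_all add: theta_def coeff_pderiv)

definition vf :: "real \<Rightarrow> real poly \<Rightarrow> real \<Rightarrow> real" where
  "vf t u x = \<bar>x\<bar> powr (- t) * poly u x"

lemma vf_deriv:
  assumes x: "x < 0"
  shows "DERIV (vf t u) x :> - ((- x) powr (- t - 1)) * poly (wt t u) x"
proof -
  have d1: "DERIV (\<lambda>x. (- x) powr (- t)) x :> (- t) * (- x) powr (- t - of_nat 1) * (- 1)"
    by (rule DERIV_fun_powr) (auto intro!: derivative_eq_intros simp: x)
  have d2: "DERIV (\<lambda>x. (- x) powr (- t) * poly u x) x :>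
      ((- t) * (- x) powr (- t - of_nat 1) * (- 1)) * poly u x + poly (pderiv u) x * (- x) powr (- t)"
    by (rule DERIV_mult[OF d1 poly_DERIV])
  have ev: "eventually (\<lambda>y. (- y) powr (- t) * poly u y = vf t u y) (nhds x)"
  proof -
    have "eventually (\<lambda>y. y \<in> {..<0}) (nhds x)" using x by (intro eventually_nhds_in_open) auto
    then show ?thesis by eventually_elim (auto simp: vf_def)
  qed
  have pw: "(- x) powr (- t) = (- x) powr (- t - 1) * (- x)"
    using x powr_add[of "- x" "- t - 1" 1] by (simp add: powr_one)
  have eq: "((- t) * (- x) powr (- t - of_nat 1) * (- 1)) * poly u x + poly (pderiv u) x * (- x) powr (- t)
      = - ((- x) powr (- t - 1)) * poly (wt t u) x"
    unfolding poly_wt pw by (simp add: algebra_simps)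
  show ?thesis using d2 unfolding eq by (subst (asm) DERIV_cong_ev[OF refl ev refl])
qed

lemma vf_deriv0: "x < 0 \<Longrightarrow> DERIV (vf t u) c :> 0 \<Longrightarrow> c < 0 \<Longrightarrow> poly (wt t u) c = 0"
proof -
  assume c: "c < 0" and d: "DERIV (vf t u) c :> 0"
  have "- ((- c) powr (- t - 1)) * poly (wt t u) c = 0" using DERIV_unique[OF vf_deriv[OF c] d] .
  moreover have "(- c) powr (- t - 1) > 0" using c by simp
  ultimately show ?thesis by simp
qed

lemma vf_zero: "x < 0 \<Longrightarrow> vf t u x = 0 \<longleftrightarrow> poly u x = 0"
  by (simp add: vf_def)

lemma vf_cont_neg: "b < 0 \<Longrightarrow> continuous_on {a..b} (vf t u)"
proof (rule continuous_at_imp_continuous_on, rule ballI)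
  fix x assume "b < 0" "x \<in> {a..b}"
  then have "x < 0" by auto
  then show "isCont (vf t u) x" by (rule DERIV_isCont[OF vf_deriv])
qed

lemma vf_diff: "x < 0 \<Longrightarrow> vf t u differentiable (at x)"
  using vf_deriv real_differentiable_def by blast

lemma rolle_int:
  assumes "r1 < r2" "r2 < 0" "poly u r1 = 0" "poly u r2 = 0"
  shows "\<exists>c. r1 < c \<and> c < r2 \<and> poly (wt t u) c = 0"
proof -
  have eq: "vf t u r1 = vf t u r2" using assms by (simp add: vf_def)
  have dif: "\<And>x. r1 < x \<Longrightarrow> x < r2 \<Longrightarrow> vf t u differentiable (at x)"
    using assms(2) vf_diff by (meson order.strict_trans)
  from Rolle[OF assms(1) eq vf_cont_neg[OF assms(2)] dif]
  obtain c where c: "r1 < c" "c < r2" "DERIV (vf t u) c :> 0" by blast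
  have "c < 0" using c assms(2) by simp
  have "poly (wt t u) c = 0" using vf_deriv0[OF \<open>c < 0\<close> c(3) \<open>c < 0\<close>] .
  then show ?thesis using c by blast
qed

lemma rolle_right_neg:
  assumes "t < 0" "r < 0" "poly u r = 0"
  shows "\<exists>c. r < c \<and> c < 0 \<and> poly (wt t u) c = 0"
proof -
  have eq: "vf t u r = vf t u 0" using assms by (simp add: vf_def)
  have ct: "continuous_on {r..0} (vf t u)"
    unfolding vf_def using assms(1)
    by (intro continuous_intros continuous_on_powr') auto
  have dif: "\<And>x. r < x \<Longrightarrow> x < 0 \<Longrightarrow> vf t u differentiable (at x)"
    using vf_diff by blast
  from Rolle[OF assms(2) eq ct dif]
  obtain c where c: "r < c" "c < 0" "DERIV (vf t u) c :> 0" by blast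
  then have "poly (wt t u) c = 0" using vf_deriv0[OF c(2) c(3) c(2)] by blast
  then show ?thesis using c by blast
qed

lemma rolle_right_zero:
  assumes "r < 0" "poly u r = 0" "poly u 0 = 0"
  shows "\<exists>c. r < c \<and> c < 0 \<and> poly (wt 0 u) c = 0"
proof -
  have eq: "poly u r = poly u 0" using assms by simp
  have ct: "continuous_on {r..0} (poly u)" by (intro continuous_intros)
  have dif: "\<And>x. r < x \<Longrightarrow> x < 0 \<Longrightarrow> poly u differentiable (at x)"
    using poly_DERIV real_differentiable_def by blast
  from Rolle[OF assms(1) eq ct dif]
  obtain c where c: "r < c" "c < 0" "DERIV (poly u) c :> 0" by blast
  have "poly (pderiv u) c = 0" using DERIV_unique[OF poly_DERIV c(3)] .
  then show ?thesis using c by (auto simp: poly_wt)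
qed

lemma rolle_at_bot:
  fixes f f' :: "real \<Rightarrow> real"
  assumes der: "\<And>x. x < b \<Longrightarrow> DERIV f x :> f' x"
    and cont: "continuous_on {..b} f" and fb: "f b = 0" and lim: "(f \<longlongrightarrow> 0) at_bot"
  shows "\<exists>c<b. f' c = 0"
proof (cases "\<forall>x<b. f x = 0")
  case True
  have "f' (b - 1) = 0"
  proof (rule DERIV_local_const[OF der[of "b - 1"]])
    show "b - 1 < b" by simp
    show "(0::real) < 1" by simp
    show "\<forall>y. \<bar>b - 1 - y\<bar> < 1 \<longrightarrow> f (b - 1) = f y" using True by auto
  qed
  then show ?thesis by (intro exI[of _ "b - 1"]) auto
next
  case False
  then obtain x0 where x0: "x0 < b" "f x0 \<noteq> 0" by auto
  have main: "\<exists>c<b. g' c = 0" if gder: "\<And>x. x < b \<Longrightarrow> DERIV g x :> g' x"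
    and gcont: "continuous_on {..b} g" and gb: "g b = 0" and glim: "(g \<longlongrightarrow> 0) at_bot"
    and gx0: "g x0 > 0" for g g' :: "real \<Rightarrow> real"
  proof -
    define e where "e = g x0 / 2"
    have e: "e > 0" "e < g x0" using gx0 by (auto simp: e_def)
    have "eventually (\<lambda>x. dist (g x) 0 < e) at_bot" using glim e(1) by (rule tendstoD)
    then obtain N where N: "\<And>x. x \<le> N \<Longrightarrow> \<bar>g x\<bar> < e" by (auto simp: eventually_at_bot_linorder)
    define y where "y = min N (x0 - 1)"
    have y: "y < x0" "g y < e" using N[of y] by (auto simp: y_def)
    have c1: "continuous_on {y..x0} g" using gcont by (rule continuous_on_subset) (use x0 in auto)
    have c2: "continuous_on {x0..b} g" using gcont by (rule continuous_on_subset) auto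
    obtain c1 where c1': "y \<le> c1" "c1 \<le> x0" "g c1 = e"
      using IVT'[of g y e x0] y e c1 by auto
    obtain c2 where c2': "x0 \<le> c2" "c2 \<le> b" "g c2 = e"
      using IVT2'[of g b e x0] gb e x0 c2 by auto
    have lt: "c1 < c2"
    proof (rule ccontr)
      assume "\<not> c1 < c2"
      then have "c1 = x0" using c1' c2' by linarith
      then show False using c1' e by simp
    qed
    have cc: "continuous_on {c1..c2} g" using gcont by (rule continuous_on_subset) (use c2' in auto)
    have eq: "g c1 = g c2" using c1' c2' by simp
    have dif: "\<And>x. c1 < x \<Longrightarrow> x < c2 \<Longrightarrow> g differentiable (at x)"
    proof -
      fix x assume "c1 < x" "x < c2"
      then have "x < b" using c2' by simp
      then show "g differentiable (at x)" using gder real_differentiable_def by blast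
    qed
    from Rolle[OF lt eq cc dif]
    obtain z where z: "c1 < z" "z < c2" "DERIV g z :> 0" by blast
    have "z < b" using z c2' by auto
    then have "g' z = 0" using DERIV_unique[OF gder z(3)] by simp
    then show ?thesis using \<open>z < b\<close> by auto
  qed
  show ?thesis
  proof (cases "f x0 > 0")
    case True
    then show ?thesis using main[OF der cont fb lim] by blast
  next
    case False
    then have pos: "(\<lambda>x. - f x) x0 > 0" using x0 by simp
    have d': "\<And>x. x < b \<Longrightarrow> DERIV (\<lambda>x. - f x) x :> - f' x" using der by (rule DERIV_minus)
    have c': "continuous_on {..b} (\<lambda>x. - f x)" using cont by (rule continuous_on_minus)
    have b': "(\<lambda>x. - f x) b = 0" using fb by simp
    have l': "((\<lambda>x. - f x) \<longlongrightarrow> 0) at_bot" using tendsto_minus[OF lim] by simp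
    have "\<exists>c<b. - f' c = 0" by (rule main[OF d' c' b' l' pos])
    then show ?thesis by auto
  qed
qed

lemma vf_lim:
  assumes "real (degree u) < t"
  shows "(vf t u \<longlongrightarrow> 0) at_bot"
proof -
  define g where "g x = (\<Sum>i\<le>degree u. coeff u i * ((-1)^i * (- x) powr (real i - t)))" for x
  have ev: "eventually (\<lambda>x. vf t u x = g x) at_bot"
  proof -
    have "eventually (\<lambda>x. x < (0::real)) at_bot" by (rule eventually_at_bot_linorderI[of "-1"]) simp
    then show ?thesis
    proof eventually_elim
      case (elim x)
      have "vf t u x = (\<Sum>i\<le>degree u. coeff u i * (\<bar>x\<bar> powr (- t) * x ^ i))"
        unfolding vf_def poly_altdef by (simp add: sum_distrib_left algebra_simps)
      also have "\<dots> = g x"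
        unfolding g_def
      proof (rule sum.cong[OF refl])
        fix i assume "i \<in> {..degree u}"
        have xi: "x ^ i = (-1)^i * (- x) ^ i" by (simp add: power_minus[symmetric])
        have "(- x) ^ i = (- x) powr (real i)" using elim by (simp add: powr_realpow)
        then have "\<bar>x\<bar> powr (- t) * x ^ i = (-1)^i * ((- x) powr (- t) * (- x) powr (real i))"
          using elim xi by simp
        also have "(- x) powr (- t) * (- x) powr (real i) = (- x) powr (real i - t)"
          by (simp add: powr_add[symmetric])
        finally show "coeff u i * (\<bar>x\<bar> powr (- t) * x ^ i) = coeff u i * ((-1)^i * (- x) powr (real i - t))"
          by simp
      qed
      finally show ?case .
    qed
  qed
  have "(g \<longlongrightarrow> 0) at_bot"
    unfolding g_def
  proof (rule tendsto_null_sum)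
    fix i assume i: "i \<in> {..degree u}"
    have "real i - t < 0" using i assms by auto
    then have "((\<lambda>x. (- x) powr (real i - t)) \<longlongrightarrow> 0) at_bot"
      by (rule tendsto_neg_powr) (rule filterlim_uminus_at_top_at_bot)
    then show "((\<lambda>x. coeff u i * ((-1)^i * (- x) powr (real i - t))) \<longlongrightarrow> 0) at_bot"
      by (intro tendsto_mult_right_zero)
  qed
  then show ?thesis using tendsto_cong[OF ev] by simp
qed

lemma rolle_left_big:
  assumes "real (degree u) < t" "r < 0" "poly u r = 0"
  shows "\<exists>c<r. poly (wt t u) c = 0"
proof -
  have der: "\<And>x. x < r \<Longrightarrow> DERIV (vf t u) x :> - ((- x) powr (- t - 1)) * poly (wt t u) x"
    using assms(2) vf_deriv by simp
  have cont: "continuous_on {..r} (vf t u)"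
  proof (rule continuous_at_imp_continuous_on, rule ballI)
    fix x assume "x \<in> {..r}"
    then have "x < 0" using assms(2) by auto
    then show "isCont (vf t u) x" by (rule DERIV_isCont[OF vf_deriv])
  qed
  have fb: "vf t u r = 0" using assms by (simp add: vf_def)
  obtain c where c: "c < r" "- ((- c) powr (- t - 1)) * poly (wt t u) c = 0"
    using rolle_at_bot[OF der cont fb vf_lim[OF assms(1)]] by blast
  have "(- c) powr (- t - 1) > 0" using c assms(2) by simp
  then show ?thesis using c by auto
qed

lemma order_ge_dvd: "p \<noteq> 0 \<Longrightarrow> [:-a, 1:] ^ m dvd p \<Longrightarrow> m \<le> order a p"
proof (rule ccontr)
  assume p: "p \<noteq> 0" and d: "[:-a, 1:] ^ m dvd p" and "\<not> m \<le> order a p"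
  then have "Suc (order a p) \<le> m" by simp
  then have "[:-a, 1:] ^ Suc (order a p) dvd [:-a, 1:] ^ m" by (rule le_imp_power_dvd)
  then have "[:-a, 1:] ^ Suc (order a p) dvd p" using d by (rule dvd_trans)
  then show False using order_2[OF p] by blast
qed

lemma theta_mult: "theta u = [:0,1:] * pderiv u"
  by (simp add: theta_def)

lemma order_wt:
  assumes u: "u \<noteq> 0" and w: "wt t u \<noteq> 0" and r: "poly u r = 0"
  shows "order r u \<le> Suc (order r (wt t u))"
proof -
  have pd: "pderiv u \<noteq> 0"
  proof
    assume "pderiv u = 0"
    then have "degree u = 0" by (simp add: pderiv_eq_0_iff)
    then obtain c where "u = [:c:]" by (metis degree_eq_zeroE)
    then show False using u r by simp
  qed
  have ou: "order r u = Suc (order r (pderiv u))" using order_pderiv[OF u r] .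
  define m where "m = order r (pderiv u)"
  have d1: "[:-r,1:]^m dvd pderiv u" unfolding m_def by (rule order_1)
  have "[:-r,1:]^(Suc m) dvd u" using order_1[of r u] ou unfolding m_def by simp
  then have d2: "[:-r,1:]^m dvd u" using le_imp_power_dvd[of m "Suc m" "[:-r,1:]"] dvd_trans by auto
  have "[:-r,1:]^m dvd wt t u"
    unfolding wt_def theta_mult using d1 d2 by (intro dvd_diff dvd_mult dvd_smult)
  then have "m \<le> order r (wt t u)" by (rule order_ge_dvd[OF w])
  then show ?thesis using ou unfolding m_def by simp
qed

definition Nn :: "real poly \<Rightarrow> nat" where
  "Nn p = (\<Sum>r\<in>{r::real. r < 0 \<and> poly p r = 0}. order r p)"

lemma sum_order_le_Nn:
  assumes w: "w \<noteq> 0" and X: "finite X" "X \<subseteq> {r. r < 0}"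
  shows "(\<Sum>r\<in>X. order r w) \<le> Nn w"
proof -
  let ?R = "{r::real. r < 0 \<and> poly w r = 0}"
  have finR: "finite ?R" using poly_roots_finite[OF w] by (rule rev_finite_subset) auto
  have "(\<Sum>r\<in>X. order r w) = (\<Sum>r\<in>X \<inter> ?R. order r w)"
    using X(1) by (intro sum.mono_neutral_right) (use X(2) w in \<open>auto simp: order_0I order_root\<close>)
  also have "\<dots> \<le> (\<Sum>r\<in>?R. order r w)" using finR by (intro sum_mono2) auto
  finally show ?thesis unfolding Nn_def .
qed

lemma count_gen:
  fixes u w :: "real poly" and A :: "real set" and cf :: "real \<Rightarrow> real"
  assumes w0: "w \<noteq> 0" and u0: "u \<noteq> 0"
    and ord: "\<And>r. r < 0 \<Longrightarrow> poly u r = 0 \<Longrightarrow> order r u \<le> Suc (order r w)"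
    and A: "A \<subseteq> {r. r < 0 \<and> poly u r = 0}"
    and cA: "\<And>r. r \<in> A \<Longrightarrow> cf r < 0 \<and> poly w (cf r) = 0 \<and> poly u (cf r) \<noteq> 0"
    and inj: "inj_on cf A"
  shows "Nn u + card A \<le> Nn w + card {r::real. r < 0 \<and> poly u r = 0}"
proof -
  let ?Ru = "{r::real. r < 0 \<and> poly u r = 0}"
  have finRu: "finite ?Ru" using poly_roots_finite[OF u0] by (rule rev_finite_subset) auto
  have finA: "finite A" using finite_subset[OF A finRu] .
  have "Nn u \<le> (\<Sum>r\<in>?Ru. Suc (order r w))" unfolding Nn_def by (rule sum_mono) (use ord in auto)
  also have "\<dots> = (\<Sum>r\<in>?Ru. order r w) + card ?Ru" by (simp add: sum_Suc)
  finally have 1: "Nn u \<le> (\<Sum>r\<in>?Ru. order r w) + card ?Ru" .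
  have disj: "?Ru \<inter> cf ` A = {}" using cA by auto
  have "(\<Sum>r\<in>?Ru. order r w) + (\<Sum>r\<in>cf ` A. order r w) = (\<Sum>r\<in>?Ru \<union> cf ` A. order r w)"
    using finRu finA disj by (simp add: sum.union_disjoint)
  also have "\<dots> \<le> Nn w" using finRu finA cA by (intro sum_order_le_Nn[OF w0]) auto
  finally have 2: "(\<Sum>r\<in>?Ru. order r w) + (\<Sum>r\<in>cf ` A. order r w) \<le> Nn w" .
  have "(\<Sum>r\<in>cf ` A. order r w) = (\<Sum>r\<in>A. order (cf r) w)" using inj by (simp add: sum.reindex)
  also have "\<dots> \<ge> (\<Sum>r\<in>A. 1)"
    by (rule sum_mono) (use cA w0 in \<open>auto simp: order_root Suc_le_eq\<close>)
  finally have 3: "card A \<le> (\<Sum>r\<in>cf ` A. order r w)" by simp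
  show ?thesis using 1 2 3 by linarith
qed

lemma right_choice:
  fixes u w :: "real poly"
  assumes u0: "u \<noteq> 0"
    and int: "\<And>r1 r2. r1 < r2 \<Longrightarrow> r2 < 0 \<Longrightarrow> poly u r1 = 0 \<Longrightarrow> poly u r2 = 0 \<Longrightarrow> \<exists>c. r1 < c \<and> c < r2 \<and> poly w c = 0"
    and r: "r < 0" "poly u r = 0"
    and bd: "(\<exists>y. r < y \<and> y < 0 \<and> poly u y = 0) \<or> (\<exists>c. r < c \<and> c < 0 \<and> poly w c = 0)"
  shows "\<exists>c. r < c \<and> c < 0 \<and> poly w c = 0 \<and> (\<forall>y. r < y \<and> y \<le> c \<longrightarrow> poly u y \<noteq> 0)"
proof (cases "\<exists>y. r < y \<and> y < 0 \<and> poly u y = 0")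
  case True
  define S where "S = {y. r < y \<and> y < 0 \<and> poly u y = 0}"
  have finS: "finite S" unfolding S_def using poly_roots_finite[OF u0] by (rule rev_finite_subset) auto
  have neS: "S \<noteq> {}" using True unfolding S_def by auto
  define r' where "r' = Min S"
  have r'S: "r' \<in> S" unfolding r'_def using finS neS by (rule Min_in)
  have r'min: "\<And>y. y \<in> S \<Longrightarrow> r' \<le> y" unfolding r'_def using finS by simp
  obtain c where c: "r < c" "c < r'" "poly w c = 0"
    using int[of r r'] r r'S unfolding S_def by auto
  have "\<forall>y. r < y \<and> y \<le> c \<longrightarrow> poly u y \<noteq> 0"
  proof (intro allI impI)
    fix y assume y: "r < y \<and> y \<le> c"
    show "poly u y \<noteq> 0"
    proof
      assume "poly u y = 0"
      then have "y \<in> S" using y c r'S unfolding S_def by auto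
      then show False using r'min[of y] y c by auto
    qed
  qed
  then show ?thesis using c r'S unfolding S_def by auto
next
  case False
  then obtain c where "r < c" "c < 0" "poly w c = 0" using bd by auto
  then show ?thesis using False by (intro exI[of _ c]) auto
qed

lemma left_choice:
  fixes u w :: "real poly"
  assumes u0: "u \<noteq> 0"
    and int: "\<And>r1 r2. r1 < r2 \<Longrightarrow> r2 < 0 \<Longrightarrow> poly u r1 = 0 \<Longrightarrow> poly u r2 = 0 \<Longrightarrow> \<exists>c. r1 < c \<and> c < r2 \<and> poly w c = 0"
    and r: "r < 0" "poly u r = 0"
    and bd: "\<exists>c. c < r \<and> poly w c = 0"
  shows "\<exists>c. c < r \<and> poly w c = 0 \<and> (\<forall>y. c \<le> y \<and> y < r \<longrightarrow> poly u y \<noteq> 0)"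
proof (cases "\<exists>y. y < r \<and> poly u y = 0")
  case True
  define S where "S = {y. y < r \<and> poly u y = 0}"
  have finS: "finite S" unfolding S_def using poly_roots_finite[OF u0] by (rule rev_finite_subset) auto
  have neS: "S \<noteq> {}" using True unfolding S_def by auto
  define r' where "r' = Max S"
  have r'S: "r' \<in> S" unfolding r'_def using finS neS by (rule Max_in)
  have r'max: "\<And>y. y \<in> S \<Longrightarrow> y \<le> r'" unfolding r'_def using finS by simp
  obtain c where c: "r' < c" "c < r" "poly w c = 0"
    using int[of r' r] r r'S unfolding S_def by auto
  have "\<forall>y. c \<le> y \<and> y < r \<longrightarrow> poly u y \<noteq> 0"
  proof (intro allI impI)
    fix y assume y: "c \<le> y \<and> y < r"
    show "poly u y \<noteq> 0"
    proof
      assume "poly u y = 0"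
      then have "y \<in> S" using y unfolding S_def by auto
      then show False using r'max[of y] y c by auto
    qed
  qed
  then show ?thesis using c by auto
next
  case False
  then obtain c where "c < r" "poly w c = 0" using bd by auto
  then show ?thesis using False by (intro exI[of _ c]) auto
qed

lemma N_right:
  assumes u0: "u \<noteq> 0" and w0: "wt t u \<noteq> 0"
    and bd: "\<And>r. r < 0 \<Longrightarrow> poly u r = 0 \<Longrightarrow> \<exists>c. r < c \<and> c < 0 \<and> poly (wt t u) c = 0"
  shows "Nn u \<le> Nn (wt t u)"
proof -
  let ?w = "wt t u"
  let ?Ru = "{r::real. r < 0 \<and> poly u r = 0}"
  have "\<forall>r\<in>?Ru. \<exists>c. r < c \<and> c < 0 \<and> poly ?w c = 0 \<and> (\<forall>y. r < y \<and> y \<le> c \<longrightarrow> poly u y \<noteq> 0)"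
    using right_choice[OF u0 rolle_int] bd by blast
  then obtain cf where cf: "\<And>r. r \<in> ?Ru \<Longrightarrow> r < cf r \<and> cf r < 0 \<and> poly ?w (cf r) = 0 \<and> (\<forall>y. r < y \<and> y \<le> cf r \<longrightarrow> poly u y \<noteq> 0)"
    by metis
  have inj: "inj_on cf ?Ru"
  proof (rule inj_onI)
    fix x y assume x: "x \<in> ?Ru" and y: "y \<in> ?Ru" and e: "cf x = cf y"
    show "x = y"
    proof (rule ccontr)
      assume "x \<noteq> y"
      then consider "x < y" | "y < x" by linarith
      then show False
      proof cases
        case 1 then show False using cf[OF x] cf[OF y] e y by force
      next
        case 2 then show False using cf[OF x] cf[OF y] e x by force
      qed
    qed
  qed
  have "Nn u + card ?Ru \<le> Nn ?w + card ?Ru"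
    by (rule count_gen[OF w0 u0 order_wt[OF u0 w0] _ _ inj]) (use cf in force)+
  then show ?thesis by simp
qed

lemma N_left:
  assumes u0: "u \<noteq> 0" and w0: "wt t u \<noteq> 0"
    and bd: "\<And>r. r < 0 \<Longrightarrow> poly u r = 0 \<Longrightarrow> \<exists>c. c < r \<and> poly (wt t u) c = 0"
  shows "Nn u \<le> Nn (wt t u)"
proof -
  let ?w = "wt t u"
  let ?Ru = "{r::real. r < 0 \<and> poly u r = 0}"
  have "\<forall>r\<in>?Ru. \<exists>c. c < r \<and> poly ?w c = 0 \<and> (\<forall>y. c \<le> y \<and> y < r \<longrightarrow> poly u y \<noteq> 0)"
    using left_choice[OF u0 rolle_int] bd by blast
  then obtain cf where cf: "\<And>r. r \<in> ?Ru \<Longrightarrow> cf r < r \<and> poly ?w (cf r) = 0 \<and> (\<forall>y. cf r \<le> y \<and> y < r \<longrightarrow> poly u y \<noteq> 0)"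
    by metis
  have inj: "inj_on cf ?Ru"
  proof (rule inj_onI)
    fix x y assume x: "x \<in> ?Ru" and y: "y \<in> ?Ru" and e: "cf x = cf y"
    show "x = y"
    proof (rule ccontr)
      assume "x \<noteq> y"
      then consider "x < y" | "y < x" by linarith
      then show False
      proof cases
        case 1 then show False using cf[OF x] cf[OF y] e x by force
      next
        case 2 then show False using cf[OF x] cf[OF y] e y by force
      qed
    qed
  qed
  have "Nn u + card ?Ru \<le> Nn ?w + card ?Ru"
    by (rule count_gen[OF w0 u0 order_wt[OF u0 w0] _ _ inj]) (use cf in force)+
  then show ?thesis by simp
qed

lemma N_plain:
  assumes u0: "u \<noteq> 0" and w0: "wt t u \<noteq> 0"
  shows "Nn u \<le> Nn (wt t u) + 1"
proof -
  let ?w = "wt t u"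
  let ?Ru = "{r::real. r < 0 \<and> poly u r = 0}"
  have finRu: "finite ?Ru" using poly_roots_finite[OF u0] by (rule rev_finite_subset) auto
  show ?thesis
  proof (cases "?Ru = {}")
    case True
    then have "Nn u = 0" unfolding Nn_def by (metis sum.empty)
    then show ?thesis by simp
  next
    case False
    define A where "A = ?Ru - {Max ?Ru}"
    have mx: "Max ?Ru \<in> ?Ru" using finRu False by (rule Max_in)
    have cA0: "Suc (card A) = card ?Ru" unfolding A_def by (rule card_Suc_Diff1[OF finRu mx])
    then have cA: "card A + 1 = card ?Ru" by simp
    have AR: "A \<subseteq> ?Ru" unfolding A_def by blast
    have "\<forall>r\<in>A. \<exists>c. r < c \<and> c < 0 \<and> poly ?w c = 0 \<and> (\<forall>y. r < y \<and> y \<le> c \<longrightarrow> poly u y \<noteq> 0)"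
    proof
      fix r assume r: "r \<in> A"
      have rR: "r < 0" "poly u r = 0" using r AR by auto
      have "r \<in> ?Ru" using r AR by blast
      then have "r \<le> Max ?Ru" by (rule Max_ge[OF finRu])
      moreover have "r \<noteq> Max ?Ru" using r unfolding A_def by blast
      ultimately have "r < Max ?Ru" by simp
      moreover have "Max ?Ru < 0" "poly u (Max ?Ru) = 0" using mx by auto
      ultimately have ex: "\<exists>y. r < y \<and> y < 0 \<and> poly u y = 0" by blast
      show "\<exists>c. r < c \<and> c < 0 \<and> poly ?w c = 0 \<and> (\<forall>y. r < y \<and> y \<le> c \<longrightarrow> poly u y \<noteq> 0)"
        using right_choice[OF u0 rolle_int rR] ex by blast
    qed
    then obtain cf where cf: "\<And>r. r \<in> A \<Longrightarrow> r < cf r \<and> cf r < 0 \<and> poly ?w (cf r) = 0 \<and> (\<forall>y. r < y \<and> y \<le> cf r \<longrightarrow> poly u y \<noteq> 0)"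
      by metis
    have inj: "inj_on cf A"
    proof (rule inj_onI)
      fix x y assume x: "x \<in> A" and y: "y \<in> A" and e: "cf x = cf y"
      have px: "poly u x = 0" and py: "poly u y = 0" using x y AR by auto
      show "x = y"
      proof (rule ccontr)
        assume "x \<noteq> y"
        then consider "x < y" | "y < x" by linarith
        then show False
        proof cases
          case 1
          have "y < cf x" using cf[OF y] e by simp
          then have "x < y \<and> y \<le> cf x" using 1 by simp
          then show False using cf[OF x] py by blast
        next
          case 2
          have "x < cf y" using cf[OF x] e by simp
          then have "y < x \<and> x \<le> cf y" using 2 by simp
          then show False using cf[OF y] px by blast
        qed
      qed
    qed
    have cA': "\<And>r. r \<in> A \<Longrightarrow> cf r < 0 \<and> poly ?w (cf r) = 0 \<and> poly u (cf r) \<noteq> 0"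
    proof -
      fix r assume r: "r \<in> A"
      show "cf r < 0 \<and> poly ?w (cf r) = 0 \<and> poly u (cf r) \<noteq> 0" using cf[OF r] by auto
    qed
    have "Nn u + card A \<le> Nn ?w + card ?Ru"
      by (rule count_gen[OF w0 u0 order_wt[OF u0 w0] AR cA' inj])
    then show ?thesis using cA by simp
  qed
qed

definition Op :: "nat \<Rightarrow> real \<Rightarrow> real poly \<Rightarrow> real poly" where
  "Op n a u = smult a u + smult ((1 - a) / real n) (theta u)"

lemma coeff_Op: "coeff (Op n a u) j = (a + (1 - a) * real j / real n) * coeff u j"
  by (simp add: Op_def coeff_theta algebra_simps)

lemma deg_Op: "degree (Op n a u) \<le> degree u"
  by (rule degree_le) (simp add: coeff_Op coeff_eq_0)

lemma Nn_smult: "c \<noteq> 0 \<Longrightarrow> Nn (smult c p) = Nn p"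
  by (simp add: Nn_def order_smult)

lemma Nn_zero: "Nn 0 = 0"
proof -
  have "infinite {r::real. r < 0}"
  proof
    assume "finite {r::real. r < 0}"
    moreover have "{r::real. r < 0} = {..<0}" by auto
    ultimately show False using infinite_Iio[of "0::real"] by simp
  qed
  then show ?thesis unfolding Nn_def by simp
qed

lemma wt_nz:
  assumes u: "u \<noteq> 0" and t: "real (degree u) \<noteq> t"
  shows "wt t u \<noteq> 0"
proof -
  have "coeff (wt t u) (degree u) = (real (degree u) - t) * lead_coeff u"
    by (simp add: wt_def coeff_theta algebra_simps)
  moreover have "lead_coeff u \<noteq> 0" using u by simp
  ultimately have "coeff (wt t u) (degree u) \<noteq> 0" using t by simp
  then show ?thesis by auto
qed

lemma Op_wt: "a \<noteq> 1 \<Longrightarrow> n > 0 \<Longrightarrow> Op n a u = smult ((1 - a) / real n) (wt (real n * a / (a - 1)) u)"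
proof -
  assume a: "a \<noteq> 1" and n: "n > 0"
  have "(1 - a) / real n * (real n * a / (a - 1)) = - a"
    using a n by (simp add: field_simps)
  then show ?thesis unfolding Op_def wt_def
    by (simp add: smult_diff_right algebra_simps)
qed

lemma Op_one: "Op n 1 u = u" by (simp add: Op_def)

lemma const_noroot: "degree u = 0 \<Longrightarrow> Nn u = 0"
proof -
  assume "degree u = 0"
  then obtain c where c: "u = [:c:]" by (metis degree_eq_zeroE)
  show "Nn u = 0"
  proof (cases "c = 0")
    case True then show ?thesis using c Nn_zero by simp
  next
    case False
    then have "{r::real. r < 0 \<and> poly u r = 0} = {}" using c by simp
    then show ?thesis unfolding Nn_def by (metis sum.empty)
  qed
qed

lemma wt0_zero: "wt 0 u = 0 \<Longrightarrow> degree u = 0"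
proof -
  assume "wt 0 u = 0"
  then have "pderiv u = 0" by (simp add: wt_def theta_def)
  then show ?thesis by (simp add: pderiv_eq_0_iff)
qed

lemma Op_pos:
  assumes a: "a > 0" and deg: "degree u \<le> n" and n: "n > 0"
  shows "Nn u \<le> Nn (Op n a u)"
proof (cases "u = 0")
  case True then show ?thesis using Nn_zero by (simp add: Op_def theta_def)
next
  case u0: False
  show ?thesis
  proof (cases "a = 1")
    case True then show ?thesis by (simp add: Op_one)
  next
    case a1: False
    define t where "t = real n * a / (a - 1)"
    have eq: "Op n a u = smult ((1 - a) / real n) (wt t u)" unfolding t_def using Op_wt[OF a1 n] .
    have c0: "(1 - a) / real n \<noteq> 0" using a1 n by simp
    have "Nn u \<le> Nn (wt t u)"
    proof (cases "a < 1")
      case True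
      have tneg: "t < 0" unfolding t_def using True a n by (simp add: divide_pos_neg)
      have w0: "wt t u \<noteq> 0" using wt_nz[OF u0] tneg by simp
      show ?thesis by (rule N_right[OF u0 w0]) (rule rolle_right_neg[OF tneg])
    next
      case False
      then have a1': "a > 1" using a1 by simp
      have "real n < t"
      proof -
        have "real n * (a - 1) < real n * a" using n by simp
        then show ?thesis unfolding t_def using a1' by (simp add: field_simps)
      qed
      then have tbig: "real (degree u) < t" using deg by linarith
      have w0: "wt t u \<noteq> 0" using wt_nz[OF u0] tbig by simp
      show ?thesis by (rule N_left[OF u0 w0]) (rule rolle_left_big[OF tbig])
    qed
    then show ?thesis unfolding eq Nn_smult[OF c0] .
  qed
qed

lemma Op_zero_eq: "n > 0 \<Longrightarrow> Op n 0 u = smult (1 / real n) (wt 0 u)"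
  by (simp add: Op_def wt_def)

lemma Op_zero_plain:
  assumes n: "n > 0"
  shows "Nn u \<le> Nn (Op n 0 u) + 1"
proof (cases "u = 0")
  case True then show ?thesis using Nn_zero by simp
next
  case u0: False
  show ?thesis
  proof (cases "wt 0 u = 0")
    case True then show ?thesis using const_noroot wt0_zero by simp
  next
    case False
    have c0: "1 / real n \<noteq> 0" using n by simp
    show ?thesis unfolding Op_zero_eq[OF n] Nn_smult[OF c0] by (rule N_plain[OF u0 False])
  qed
qed

lemma Op_zero_root:
  assumes n: "n > 0" and u00: "poly u 0 = 0"
  shows "Nn u \<le> Nn (Op n 0 u)"
proof (cases "u = 0")
  case True then show ?thesis using Nn_zero by simp
next
  case u0: False
  show ?thesis
  proof (cases "wt 0 u = 0")
    case True then show ?thesis using const_noroot wt0_zero by simp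
  next
    case False
    have c0: "1 / real n \<noteq> 0" using n by simp
    show ?thesis unfolding Op_zero_eq[OF n] Nn_smult[OF c0]
      by (rule N_right[OF u0 False]) (rule rolle_right_zero[OF _ _ u00])
  qed
qed

fun Ops :: "nat \<Rightarrow> real list \<Rightarrow> real poly \<Rightarrow> real poly" where
  "Ops n [] u = u"
| "Ops n (a # L) u = Op n a (Ops n L u)"

lemma coeff_Ops: "coeff (Ops n L u) j = (\<Prod>x\<leftarrow>L. x + (1 - x) * real j / real n) * coeff u j"
  by (induction L) (simp_all add: coeff_Op)

lemma deg_Ops: "degree (Ops n L u) \<le> degree u"
  by (induction L) (auto intro: order.trans[OF deg_Op])

lemma poly0_Ops: "poly (Ops n L u) 0 = prod_list L * poly u 0"
  by (simp add: poly_0_coeff_0 coeff_Ops)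

lemma Ops_N:
  assumes L: "\<forall>x\<in>set L. x \<ge> 0" and deg: "degree u \<le> n" and n: "n > 0"
  shows "Nn u \<le> Nn (Ops n L u) + (if 0 \<in> set L \<and> poly u 0 \<noteq> 0 then 1 else 0)"
  using L
proof (induction L)
  case Nil then show ?case by simp
next
  case (Cons a L)
  let ?w = "Ops n L u"
  have IH: "Nn u \<le> Nn ?w + (if 0 \<in> set L \<and> poly u 0 \<noteq> 0 then 1 else 0)" using Cons by simp
  have dw: "degree ?w \<le> n" using deg_Ops[of n L u] deg by simp
  have a0: "a \<ge> 0" using Cons.prems by simp
  show ?case
  proof (cases "a = 0")
    case False
    then have "Nn ?w \<le> Nn (Op n a ?w)" using Op_pos[OF _ dw n] a0 by simp
    then show ?thesis using IH False by auto
  next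
    case True
    show ?thesis
    proof (cases "poly ?w 0 = 0")
      case True
      have "Nn ?w \<le> Nn (Op n 0 ?w)" using Op_zero_root[OF n True] .
      have le1: "(if 0 \<in> set L \<and> poly u 0 \<noteq> 0 then 1 else 0) \<le> (1::nat)" by simp
      have "(if 0 \<in> set (a # L) \<and> poly u 0 \<noteq> 0 then 1 else 0) =
            (if poly u 0 \<noteq> 0 then 1 else (0::nat))" using \<open>a = 0\<close> by simp
      moreover have "Nn u \<le> Nn (Op n 0 ?w) + (if poly u 0 \<noteq> 0 then 1 else 0)"
      proof (cases "poly u 0 = 0")
        case True then show ?thesis using IH \<open>Nn ?w \<le> Nn (Op n 0 ?w)\<close> by simp
      next
        case False
        then have "Nn u \<le> Nn ?w + 1" using IH le1 by linarith
        then show ?thesis using False \<open>Nn ?w \<le> Nn (Op n 0 ?w)\<close> by simp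
      qed
      ultimately show ?thesis using \<open>a = 0\<close> by simp
    next
      case False
      then have "prod_list L \<noteq> 0" "poly u 0 \<noteq> 0" using poly0_Ops[of n L u] by auto
      then have "0 \<notin> set L" by (simp add: prod_list_zero_iff)
      then have "Nn u \<le> Nn ?w" using IH by simp
      moreover have "Nn ?w \<le> Nn (Op n 0 ?w) + 1" using Op_zero_plain[OF n] .
      ultimately show ?thesis using \<open>a = 0\<close> \<open>poly u 0 \<noteq> 0\<close> by simp
    qed
  qed
qed

lemma Re_x1pow_mult: "map_poly Re ([:1,1:]^e * S) = [:1,1:]^e * map_poly Re (S :: complex poly)"
proof (rule poly_eqI)
  fix j
  have "coeff (map_poly Re ([:1,1:]^e * S)) j = Re (coeff ([:1,1:]^e * S) j)"
    by (simp add: coeff_map_poly)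
  also have "\<dots> = (\<Sum>i\<le>j. real (e choose i) * Re (coeff S (j - i)))"
    unfolding coeff_mult coeff_x1_pow by simp
  also have "\<dots> = coeff ([:1,1:]^e * map_poly Re S) j"
    unfolding coeff_mult coeff_x1_pow by (simp add: coeff_map_poly)
  finally show "coeff (map_poly Re ([:1,1:]^e * S)) j = coeff ([:1,1:]^e * map_poly Re S) j" .
qed

lemma x1pow_dvd_pderiv:
  fixes p :: "'a::{idom,semiring_char_0} poly"
  assumes "[:1,1:]^e dvd p" shows "[:1,1:]^(e - 1) dvd pderiv p"
proof (cases e)
  case 0 then show ?thesis by simp
next
  case (Suc k)
  then obtain s where s: "p = [:1,1:]^(Suc k) * s" using assms by (auto elim: dvdE)
  have "pderiv p = [:1,1:]^(Suc k) * pderiv s + smult (of_nat (Suc k)) (s * [:1,1:]^k)"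
    using lemma_order_pderiv1[of "-1" k s] unfolding s by simp
  moreover have "[:1,1:]^k dvd [:1,1:]^(Suc k) * pderiv s"
    by (rule dvd_mult2, rule le_imp_power_dvd) simp
  moreover have "[:1,1:]^k dvd smult (of_nat (Suc k)) (s * [:1,1:]^k)" by (intro dvd_smult) simp
  ultimately show ?thesis using Suc by (simp add: dvd_add)
qed

lemma prod_list_filter_split:
  "prod_list (map f xs) = prod_list (map f (filter p xs)) * prod_list (map f (filter (\<lambda>x. \<not> p x) xs))"
  for f :: "'b \<Rightarrow> 'a::comm_monoid_mult"
  by (induction xs) (auto simp: algebra_simps)

lemma length_filter_disj:
  "(\<And>x. \<not> (p x \<and> r x)) \<Longrightarrow> length (filter (\<lambda>x. p x \<or> r x) xs) = length (filter p xs) + length (filter r xs)"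
  by (induction xs) auto

definition thetaC :: "complex poly \<Rightarrow> complex poly" where "thetaC p = pCons 0 (pderiv p)"

lemma coeff_thetaC: "coeff (thetaC u) j = of_nat j * coeff u j"
  by (cases j) (simp_all add: thetaC_def coeff_pderiv)

definition CompC :: "nat \<Rightarrow> complex list \<Rightarrow> complex poly" where
  "CompC n L = Poly (map (\<lambda>j. of_nat (n choose j) * (\<Prod>a\<leftarrow>L. E n a (of_nat j))) [0..<Suc n])"

lemma coeff_CompC: "coeff (CompC n L) j = (if j \<le> n then of_nat (n choose j) * (\<Prod>a\<leftarrow>L. E n a (of_nat j)) else 0)"
  unfolding CompC_def by (simp add: nth_default_def del: upt_Suc)

lemma CompC_Nil: "CompC n [] = [:1,1:]^n"
  by (rule poly_eqI) (simp add: coeff_CompC coeff_x1_pow binomial_eq_0)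

lemma CompC_Cons: "CompC n (a # L) = smult a (CompC n L) + smult ((1 - a) / of_nat n) (thetaC (CompC n L))"
  by (rule poly_eqI) (simp add: coeff_CompC coeff_thetaC E_def algebra_simps)

lemma CompC_dvd: "[:1,1:]^(n - length L) dvd CompC n L"
proof (induction L)
  case Nil then show ?case by (simp add: CompC_Nil)
next
  case (Cons a L)
  have d1: "[:1,1:]^(n - length (a # L)) dvd CompC n L"
    using Cons.IH by (rule dvd_trans[rotated]) (rule le_imp_power_dvd, simp)
  have "[:1,1:]^(n - length L - 1) dvd pderiv (CompC n L)" by (rule x1pow_dvd_pderiv[OF Cons.IH])
  then have d2: "[:1,1:]^(n - length (a # L)) dvd thetaC (CompC n L)"
  proof -
    have e: "thetaC (CompC n L) = [:0,1:] * pderiv (CompC n L)" by (simp add: thetaC_def)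
    have "n - length L - 1 = n - length (a # L)" by simp
    then show ?thesis unfolding e using \<open>[:1,1:]^(n - length L - 1) dvd pderiv (CompC n L)\<close>
      by (metis dvd_mult)
  qed
  show ?case unfolding CompC_Cons using d1 d2 by (intro dvd_add dvd_smult)
qed


definition good :: "complex \<Rightarrow> bool" where "good z \<longleftrightarrow> (\<exists>x::real. x \<ge> 0 \<and> z = complex_of_real x)"

lemma good_iff: "good z \<longleftrightarrow> z = 0 \<or> (\<exists>x::real. x > 0 \<and> z = complex_of_real x)"
  unfolding good_def by (auto simp: order_le_less)

lemma E_real: "E n (complex_of_real x) (of_nat j) = complex_of_real (x + (1 - x) * real j / real n)"
  by (simp add: E_def)

context ctx begin

definition GG where "GG = filter good as"
definition BB where "BB = filter (\<lambda>z. \<not> good z) as"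
definition Gr where "Gr = map Re GG"
definition RR where "RR = map_poly Re (CompC n BB)"

lemma GG_real: "z \<in> set GG \<Longrightarrow> z = complex_of_real (Re z) \<and> Re z \<ge> 0"
  unfolding GG_def good_def by auto

lemma prodG: "(\<Prod>a\<leftarrow>GG. E n a (of_nat j)) = complex_of_real (\<Prod>x\<leftarrow>Gr. x + (1 - x) * real j / real n)"
proof -
  have "\<And>L. (\<forall>z\<in>set L. z = complex_of_real (Re z)) \<Longrightarrow>
     (\<Prod>a\<leftarrow>L. E n a (of_nat j)) = complex_of_real (\<Prod>x\<leftarrow>map Re L. x + (1 - x) * real j / real n)"
  proof -
    fix L :: "complex list"
    show "(\<forall>z\<in>set L. z = complex_of_real (Re z)) \<Longrightarrow>
     (\<Prod>a\<leftarrow>L. E n a (of_nat j)) = complex_of_real (\<Prod>x\<leftarrow>map Re L. x + (1 - x) * real j / real n)"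
    proof (induction L)
      case Nil then show ?case by simp
    next
      case (Cons z L)
      have "E n z (of_nat j) = complex_of_real (Re z + (1 - Re z) * real j / real n)"
        using Cons.prems E_real[of n "Re z" j] by simp
      then show ?case using Cons by simp
    qed
  qed
  then show ?thesis unfolding Gr_def using GG_real by blast
qed

lemma P_Ops: "P = Ops n Gr RR"
proof (rule poly_eqI)
  fix j
  show "coeff P j = coeff (Ops n Gr RR) j"
  proof (cases "j \<le> n")
    case True
    have "complex_of_real (coeff P j) = of_nat (n choose j) * (\<Prod>a\<leftarrow>as. E n a (of_nat j))" by (rule cP[OF True])
    also have "\<dots> = (of_nat (n choose j) * (\<Prod>a\<leftarrow>BB. E n a (of_nat j))) * (\<Prod>a\<leftarrow>GG. E n a (of_nat j))"
      unfolding GG_def BB_def using prod_list_filter_split[of "\<lambda>a. E n a (of_nat j)" as good] by (simp add: algebra_simps)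
    finally have e: "complex_of_real (coeff P j) = coeff (CompC n BB) j * complex_of_real (\<Prod>x\<leftarrow>Gr. x + (1 - x) * real j / real n)"
      unfolding prodG coeff_CompC using True by simp
    have "coeff P j = Re (complex_of_real (coeff P j))" by simp
    also have "\<dots> = Re (coeff (CompC n BB) j) * (\<Prod>x\<leftarrow>Gr. x + (1 - x) * real j / real n)"
      unfolding e by simp
    also have "\<dots> = coeff (Ops n Gr RR) j"
      unfolding coeff_Ops RR_def by (simp add: coeff_map_poly)
    finally show ?thesis .
  next
    case False
    then have "coeff P j = 0" using degP by (simp add: coeff_eq_0)
    moreover have "coeff RR j = 0" unfolding RR_def using False by (simp add: coeff_map_poly coeff_CompC)
    ultimately show ?thesis by (simp add: coeff_Ops)
  qed
qed

lemma RR_nz: "RR \<noteq> 0"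
proof
  assume "RR = 0"
  then have "Ops n Gr RR = 0" by (intro poly_eqI) (simp add: coeff_Ops)
  then show False using P_Ops Pnz by simp
qed

lemma degRR: "degree RR \<le> n"
  unfolding RR_def by (rule degree_le) (simp add: coeff_map_poly coeff_CompC)

lemma NnRR: "n - length BB \<le> Nn RR"
proof -
  obtain S where S: "CompC n BB = [:1,1:]^(n - length BB) * S" using CompC_dvd by (blast elim: dvdE)
  have "[:1,1:]^(n - length BB) dvd RR" unfolding RR_def S Re_x1pow_mult by simp
  then have "[:-(-1),1:]^(n - length BB) dvd RR" by simp
  then have "n - length BB \<le> order (-1) RR" by (rule order_ge_dvd[OF RR_nz])
  also have "order (-1) RR = (\<Sum>r\<in>{-1}. order r RR)" by simp
  also have "\<dots> \<le> Nn RR" by (rule sum_order_le_Nn[OF RR_nz]) auto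
  finally show ?thesis .
qed

lemma part2:
  "length (filter (\<lambda>z. \<exists>x::real. x > 0 \<and> z = complex_of_real x) as) + (length (filter (\<lambda>z. z = 0) as) - 1)
      \<le> (\<Sum>r\<in>{r::real. r < 0 \<and> poly P r = 0}. order r P)
   \<and> (length (filter (\<lambda>z. z = 0) as) \<ge> 1 \<longrightarrow> poly P 0 = 0)"
proof
  define q where "q = length (filter (\<lambda>z. z = 0) as)"
  define q1 where "q1 = length (filter (\<lambda>z. \<exists>x::real. x > 0 \<and> z = complex_of_real x) as)"
  have lG: "length GG = q + q1" unfolding GG_def q_def q1_def good_iff
    by (rule length_filter_disj) auto
  have lB: "length BB + length GG = n - 1" unfolding BB_def GG_def using len sum_length_filter_compl[of good as] by simp
  have e: "n - length BB = 1 + q + q1" using lB lG n1 by simp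
  have Gr0: "\<forall>x\<in>set Gr. x \<ge> 0" unfolding Gr_def using GG_real by auto
  have Gr00: "0 \<in> set Gr \<Longrightarrow> q \<ge> 1"
  proof -
    assume "0 \<in> set Gr"
    then obtain z where z: "z \<in> set GG" "Re z = 0" unfolding Gr_def by auto
    then have "z = 0" using GG_real[OF z(1)] by (metis of_real_0)
    then have "0 \<in> set as" using z(1) unfolding GG_def by simp
    then have "0 \<in> set (filter (\<lambda>z. z = 0) as)" by simp
    then have "length (filter (\<lambda>z. z = 0) as) > 0" by (rule length_pos_if_in_set)
    then show "q \<ge> 1" unfolding q_def by linarith
  qed
  have "Nn RR \<le> Nn (Ops n Gr RR) + (if 0 \<in> set Gr \<and> poly RR 0 \<noteq> 0 then 1 else 0)"
    by (rule Ops_N[OF Gr0 degRR]) (use n1 in simp)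
  then have "1 + q + q1 \<le> Nn P + (if q \<ge> 1 then 1 else 0)"
    using NnRR e P_Ops Gr00 by (auto split: if_splits)
  then have "q1 + (q - 1) \<le> Nn P" by (auto split: if_splits)
  then show "length (filter (\<lambda>z. \<exists>x::real. x > 0 \<and> z = complex_of_real x) as) + (length (filter (\<lambda>z. z = 0) as) - 1)
      \<le> (\<Sum>r\<in>{r::real. r < 0 \<and> poly P r = 0}. order r P)"
    unfolding q_def q1_def Nn_def .
  show "length (filter (\<lambda>z. z = 0) as) \<ge> 1 \<longrightarrow> poly P 0 = 0"
  proof
    assume "length (filter (\<lambda>z. z = 0) as) \<ge> 1"
    then have "filter (\<lambda>z. z = 0) as \<noteq> []" by auto
    then have "0 \<in> set as" by (metis (mono_tags) filter_False)
    then have "(\<Prod>a\<leftarrow>as. E n a (of_nat 0)) = 0" by (simp add: E_def prod_list_zero_iff)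
    then have "complex_of_real (coeff P 0) = 0" using cP[of 0] by simp
    then show "poly P 0 = 0" by (simp add: poly_0_coeff_0)
  qed
qed

end


theorem proposition1p2:
  fixes n :: nat and P Q :: "real poly" and as :: "complex list"
  assumes n2: "n \<ge> 2"
    and PQ: "P = [:1, 1:] * Q" and degQ: "degree Q = n - 1" and monQ: "lead_coeff Q = 1"
    and len: "length as = n - 1"
    and rep: "map_poly complex_of_real P = schur_szego_K n as"
  shows
    "(\<forall>m k. m = (\<Sum>r\<in>{r::real. r > 0 \<and> poly P r = 0}. order r P) \<and> k = order 0 P \<longrightarrow>
        m + (k - 1) \<le> card {x::real. x < 0 \<and> complex_of_real x \<in> set as}
      \<and> (\<forall>j\<in>{1..<k}. complex_of_real (- real j / (real n - real j)) \<in> set as)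
      \<and> (k \<ge> 1 \<longrightarrow> 0 \<in> set as))
   \<and> (\<forall>q q1. q = length (filter (\<lambda>z. z = 0) as)
          \<and> q1 = length (filter (\<lambda>z. \<exists>x::real. x > 0 \<and> z = complex_of_real x) as) \<longrightarrow>
        q1 + (q - 1) \<le> (\<Sum>r\<in>{r::real. r < 0 \<and> poly P r = 0}. order r P)
      \<and> (q \<ge> 1 \<longrightarrow> poly P 0 = 0))"
proof -
  interpret ctx n P Q as using n2 PQ degQ monQ len rep by unfold_locales
  have p1: "Zp P + (kk - 1) \<le> card {x::real. x < 0 \<and> complex_of_real x \<in> set as}
   \<and> (\<forall>j\<in>{1..<kk}. complex_of_real (- real j / (real n - real j)) \<in> set as)
   \<and> (kk \<ge> 1 \<longrightarrow> 0 \<in> set as)" by (rule part1)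
  have p2: "length (filter (\<lambda>z. \<exists>x::real. x > 0 \<and> z = complex_of_real x) as) + (length (filter (\<lambda>z. z = 0) as) - 1)
      \<le> (\<Sum>r\<in>{r::real. r < 0 \<and> poly P r = 0}. order r P)
   \<and> (length (filter (\<lambda>z. z = 0) as) \<ge> 1 \<longrightarrow> poly P 0 = 0)" by (rule part2)
  show ?thesis using p1 p2 unfolding kk_def Zp_def by blast
qed

end
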